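(* Let $f_\bullet\colon X\to Z$ be any set mapping between finite metric spaces, let $V=\mathrm{PH}_0(X)$, $U=\mathrm{PH}_0(Z)$, and let $f_0\colon V_0\to U_0$ be the induced linear map. Then for all $a\in S^V$ and all $b\in S^U$, $\mathcal{M}^0_f(a,b)=\dim H_1(G(f_\bullet)_{(a,b)})$, i.e. $\mathcal{M}^0_f(a,b)$ equals the number of independent cycles (first Betti number) of the graph $G(f_\bullet)_{(a,b)}$.
   Context: All vector spaces are over $\mathbb{Z}_2$. For a finite metric space $(X,d^X)$ and $r\ge 0$, $\mathrm{VR}_r(X)$ is the graph with vertex set $X$ and edges $[x,y]$ with $d^X(x,y)\le r$; write $\mathrm{VR}^+_s(X)=\mathrm{VR}_s(X)$ and $\mathrm{VR}^-_s(X)=\bigcup_{r<s}\mathrm{VR}_r(X)$ (edges with $d^X(x,y)<s$). $\mathrm{PH}_0(X)$ is the persistence module $r\mapsto H_0(\mathrm{VR}_r(X))$ (vector space freely generated by connected components) with structure maps $\rho_{rs}$ induced by inclusion; in particular $\mathrm{PH}_0(X)_0$ has basis $X$. Since $X$ is finite, $\mathrm{PH}_0(X)\cong \bigoplus_{b>0}\kappa_{[0,b)}^{m^V(b)}\oplus\kappa_{[0,\infty)}$; the barcode is the multiset $(S^V,m^V)$ with $S^V\subset(0,\infty)$ the set of finite $b$ with $m^V(b)>0$ (the infinite bar is excluded). For a persistence module $U$ and $b>0$ let $\ker^+_b(U)=\ker(\rho^U_{0b})$ and $\ker^-_b(U)=\bigcup_{0\le r<b}\ker(\rho^U_{0r})$,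 subspaces of $U_0$. For a set mapping $f_\bullet\colon X\to Z$, $f_0\colon V_0\to U_0$ is the linear map sending the basis element $x$ to $f_\bullet(x)$, and for $a,b>0$ $$\mathcal{M}^0_f(a,b)=\dim\frac{f_0(\ker^+_a V)\cap \ker^+_b U}{f_0(\ker^-_a V)\cap\ker^+_b U+f_0(\ker^+_a V)\cap \ker^-_b U}.$$ For $a,b>0$, $f_\bullet(\mathrm{VR}^\pm_a(X))$ denotes the graph with vertex set $f_\bullet(X)$ and edges $[f_\bullet(x),f_\bullet(y)]$ for edges $[x,y]$ of $\mathrm{VR}^\pm_a(X)$. Let $\mathcal{A}=f_\bullet(\mathrm{VR}^+_a(X))\cup\mathrm{VR}^-_b(Z)$, $\mathcal{B}=f_\bullet(\mathrm{VR}^-_a(X))\cup \mathrm{VR}^+_b(Z)$, $\mathcal{C}=f_\bullet(\mathrm{VR}^-_a(X))\cup\mathrm{VR}^-_b(Z)$, all graphs on vertex set $Z$, so $\mathcal{C}\subseteq\mathcal{A},\mathcal{B}$. Let $\pi_0$ denote the set of connected components, and $\iota\colon\pi_0(\mathcal{C})\to\pi_0(\mathcal{A})$, $\mu\colon\pi_0(\mathcal{C})\to\pi_0(\mathcal{B})$ the maps induced by inclusion. $G(f_\bullet)_{(a,b)}$ is the graph with vertex set the disjoint union $\pi_0(\mathcal{A})\sqcup\pi_0(\mathcal{C})\sqcup\pi_0(\mathcal{B})$ and edges $(c,\iota(c))$ and $(c,\mu(c))$ for all $c\in\pi_0(\mathcal{C})$. *)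

theory Defs
  imports "HOL-Analysis.Analysis" "HOL-Library.Z2"
begin

definition finite_metric :: "('x::finite \<Rightarrow> 'x \<Rightarrow> real) \<Rightarrow> bool" where
  "finite_metric d \<longleftrightarrow> (\<forall>x y. d x y = 0 \<longleftrightarrow> x = y) \<and> (\<forall>x y. d x y = d y x)
     \<and> (\<forall>x y z. d x z \<le> d x y + d y z)"

text \<open>Graphs on the vertex set UNIV, given by an edge relation.\<close>
definition conn :: "('a \<times> 'a) set \<Rightarrow> ('a \<times> 'a) set" where
  "conn E = (E \<union> E\<inverse>)\<^sup>*"

definition components :: "('a \<times> 'a) set \<Rightarrow> 'a set set" where
  "components E = UNIV // conn E"

definition VR :: "('x \<Rightarrow> 'x \<Rightarrow> real) \<Rightarrow> real \<Rightarrow> ('x \<times> 'x) set" where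
  "VR d r = {(x, y). d x y \<le> r}"

definition VRm :: "('x \<Rightarrow> 'x \<Rightarrow> real) \<Rightarrow> real \<Rightarrow> ('x \<times> 'x) set" where
  "VRm d r = {(x, y). d x y < r}"

definition img_graph :: "('x \<Rightarrow> 'z) \<Rightarrow> ('x \<times> 'x) set \<Rightarrow> ('z \<times> 'z) set" where
  "img_graph f E = (\<lambda>(x, y). (f x, f y)) ` E"

text \<open>The structure map H_0(VR_0) = Z_2^X -> H_0(G), where H_0(G) is the vector space
  freely generated by the components of G (encoded as vectors indexed by sets of points,
  supported on the components).\<close>
definition rho0 :: "('x::finite \<times> 'x) set \<Rightarrow> bit ^ 'x \<Rightarrow> bit ^ ('x set)" where
  "rho0 E v = (\<chi> C. if C \<in> components E then (\<Sum>x\<in>C. v $ x) else 0)"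

definition kerE :: "('x::finite \<times> 'x) set \<Rightarrow> (bit ^ 'x) set" where
  "kerE E = {v. rho0 E v = 0}"

definition ker_plus :: "('x::finite \<Rightarrow> 'x \<Rightarrow> real) \<Rightarrow> real \<Rightarrow> (bit ^ 'x) set" where
  "ker_plus d b = kerE (VR d b)"

definition ker_minus :: "('x::finite \<Rightarrow> 'x \<Rightarrow> real) \<Rightarrow> real \<Rightarrow> (bit ^ 'x) set" where
  "ker_minus d b = (\<Union>r\<in>{0..<b}. kerE (VR d r))"

text \<open>Multiplicity of the bar [0,b) in PH_0 and the set S of finite death times.\<close>
definition mult0 :: "('x::finite \<Rightarrow> 'x \<Rightarrow> real) \<Rightarrow> real \<Rightarrow> nat" where
  "mult0 d b = vec.dim (ker_plus d b) - vec.dim (ker_minus d b)"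

definition bars0 :: "('x::finite \<Rightarrow> 'x \<Rightarrow> real) \<Rightarrow> real set" where
  "bars0 d = {b. 0 < b \<and> mult0 d b > 0}"

definition f0 :: "('x::finite \<Rightarrow> 'z::finite) \<Rightarrow> bit ^ 'x \<Rightarrow> bit ^ 'z" where
  "f0 f v = (\<chi> z. \<Sum>x\<in>{x. f x = z}. v $ x)"

definition subspace_sum :: "('a::ab_group_add) set \<Rightarrow> 'a set \<Rightarrow> 'a set" where
  "subspace_sum A B = {u + w | u w. u \<in> A \<and> w \<in> B}"

text \<open>dim (N / D) for subspaces D \<subseteq> N.\<close>
definition quot_dim :: "(bit ^ 'n::finite) set \<Rightarrow> (bit ^ 'n) set \<Rightarrow> nat" where
  "quot_dim N D = vec.dim N - vec.dim D"

definition Mf0 :: "('x::finite \<Rightarrow> 'x \<Rightarrow> real) \<Rightarrow> ('z::finite \<Rightarrow> 'z \<Rightarrow> real)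
    \<Rightarrow> ('x \<Rightarrow> 'z) \<Rightarrow> real \<Rightarrow> real \<Rightarrow> nat" where
  "Mf0 dX dZ f a b =
     quot_dim (f0 f ` ker_plus dX a \<inter> ker_plus dZ b)
       (subspace_sum (f0 f ` ker_minus dX a \<inter> ker_plus dZ b)
                     (f0 f ` ker_plus dX a \<inter> ker_minus dZ b))"

text \<open>There are no 2-cells, so H_1 = Z_1 = ker of the boundary
  map C_1 -> C_0, boundary e = s e + t e.\<close>
definition cycle_space :: "'e::finite set \<Rightarrow> ('e \<Rightarrow> 'v) \<Rightarrow> ('e \<Rightarrow> 'v) \<Rightarrow> (bit ^ 'e) set" where
  "cycle_space Es s t =
     {v. (\<forall>e. e \<notin> Es \<longrightarrow> v $ e = 0) \<and>
         (\<forall>w. (\<Sum>e\<in>{e\<in>Es. s e = w}. v $ e) + (\<Sum>e\<in>{e\<in>Es. t e = w}. v $ e) = 0)}"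

definition graph_H1_dim :: "'e::finite set \<Rightarrow> ('e \<Rightarrow> 'v) \<Rightarrow> ('e \<Rightarrow> 'v) \<Rightarrow> nat" where
  "graph_H1_dim Es s t = vec.dim (cycle_space Es s t)"

text \<open>Vertices: Inl for pi_0(A), Inr (Inl _) for pi_0(C),
  Inr (Inr _) for pi_0(B). Edges: (c, False) = (c, iota c), (c, True) = (c, mu c)
  for c in pi_0(C). iota c = the A-component containing c, i.e. conn A `` c.\<close>
definition GA :: "('x \<Rightarrow> 'x \<Rightarrow> real) \<Rightarrow> ('z \<Rightarrow> 'z \<Rightarrow> real) \<Rightarrow> ('x \<Rightarrow> 'z) \<Rightarrow> real \<Rightarrow> real \<Rightarrow> ('z \<times> 'z) set" where
  "GA dX dZ f a b = img_graph f (VR dX a) \<union> VRm dZ b"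
definition GB :: "('x \<Rightarrow> 'x \<Rightarrow> real) \<Rightarrow> ('z \<Rightarrow> 'z \<Rightarrow> real) \<Rightarrow> ('x \<Rightarrow> 'z) \<Rightarrow> real \<Rightarrow> real \<Rightarrow> ('z \<times> 'z) set" where
  "GB dX dZ f a b = img_graph f (VRm dX a) \<union> VR dZ b"
definition GC :: "('x \<Rightarrow> 'x \<Rightarrow> real) \<Rightarrow> ('z \<Rightarrow> 'z \<Rightarrow> real) \<Rightarrow> ('x \<Rightarrow> 'z) \<Rightarrow> real \<Rightarrow> real \<Rightarrow> ('z \<times> 'z) set" where
  "GC dX dZ f a b = img_graph f (VRm dX a) \<union> VRm dZ b"

definition G_H1_dim :: "('x \<Rightarrow> 'x \<Rightarrow> real) \<Rightarrow> ('z::finite \<Rightarrow> 'z \<Rightarrow> real) \<Rightarrow> ('x \<Rightarrow> 'z) \<Rightarrow> real \<Rightarrow> real \<Rightarrow> nat" where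
  "G_H1_dim dX dZ f a b =
     graph_H1_dim ({c. c \<in> components (GC dX dZ f a b)} \<times> UNIV)
       (\<lambda>(c, _). (Inr (Inl c) :: 'z set + 'z set + 'z set))
       (\<lambda>(c, side). if side then Inr (Inr (conn (GB dX dZ f a b) `` c))
                    else Inl (conn (GA dX dZ f a b) `` c))"

end

theory Submission
  imports Defs
begin


lemma linear_vecI:
  fixes f :: "'a::field ^ 'n \<Rightarrow> 'a ^ 'm"
  assumes "\<And>x y. f (x + y) = f x + f y" "\<And>c x. f (c *s x) = c *s f x"
  shows "Vector_Spaces.linear (*s) (*s) f"
  using assms by (auto simp: Vector_Spaces.linear_iff vec.vector_space_axioms)

lemma rank_nullity_vec:
  fixes f :: "'a::field ^ 'n \<Rightarrow> 'a ^ 'm"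
  assumes lf: "Vector_Spaces.linear (*s) (*s) f" and S: "vec.subspace S"
  shows "vec.dim S = vec.dim (f ` S) + vec.dim (S \<inter> {x. f x = 0})"
proof -
  interpret lf: Vector_Spaces.linear "(*s)" "(*s)" f by (rule lf)
  define K where "K = S \<inter> {x. f x = 0}"
  have subK: "vec.subspace K" unfolding K_def
    by (rule vec.subspace_inter[OF S]) (rule lf.subspace_kernel)
  obtain B where B: "B \<subseteq> K" "vec.independent B" "K \<subseteq> vec.span B" "card B = vec.dim K"
    using vec.basis_exists by blast
  have "B \<subseteq> S" using B(1) K_def by auto
  then obtain C where C: "B \<subseteq> C" "C \<subseteq> S" "vec.independent C" "S \<subseteq> vec.span C"
    using vec.maximal_independent_subset_extend[OF _ B(2)] by metis
  have finC: "finite C" using C(3) vec.independent_bound_general by blast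
  have spanC: "vec.span C = S"
    using C(2,4) vec.span_minimal[OF C(2) S] by auto
  have spanB: "vec.span B = K"
    using B(1,3) vec.span_minimal[OF B(1) subK] by auto
  define R where "R = vec.span (C - B)"
  have subR: "vec.subspace R" unfolding R_def by (rule vec.subspace_span)
  have indCB: "vec.independent (C - B)" using C(3) vec.independent_mono by blast
  have dimR: "vec.dim R = card (C - B)" unfolding R_def
    using vec.dim_span vec.dim_eq_card_independent[OF indCB] by simp
  have RS: "R \<subseteq> S" unfolding R_def using vec.span_minimal[of "C - B" S] C(2) S by auto
  have RK: "{x + y |x y. x \<in> R \<and> y \<in> K} = S"
    using vec.span_Un[of "C - B" B] spanB spanC C(1) unfolding R_def
    by (metis Un_Diff_cancel2 Un_absorb2)
  have "vec.dim {x + y |x y. x \<in> R \<and> y \<in> K} + vec.dim (R \<inter> K) = vec.dim R + vec.dim K"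
    by (rule vec.dim_sums_Int[OF subR subK])
  moreover have "vec.dim S = card C" using spanC vec.dim_span vec.dim_eq_card_independent[OF C(3)] by metis
  moreover have "card C = card (C - B) + card B"
    using finC C(1) by (metis card_Diff_subset card_mono diff_add_inverse2 le_add_diff_inverse2
          finite_subset le_add_diff_inverse)
  ultimately have "vec.dim (R \<inter> K) = 0" using RK dimR B(4) by simp
  then have RK0: "R \<inter> K \<subseteq> {0}" by (simp add: vec.dim_eq_0)
  have inj: "inj_on f (vec.span R)"
  proof (rule inj_onI)
    fix x y assume xy: "x \<in> vec.span R" "y \<in> vec.span R" "f x = f y"
    have "vec.span R = R" unfolding R_def by (rule vec.span_span)
    then have "x \<in> R" "y \<in> R" using xy by blast+
    then have "x - y \<in> R" using vec.subspace_diff[OF subR] by blast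
    moreover have "f (x - y) = 0" using xy(3) lf.diff by simp
    ultimately have "x - y \<in> R \<inter> K" using RS K_def by auto
    then show "x = y" using RK0 by auto
  qed
  have img: "f ` S = f ` R"
  proof
    show "f ` R \<subseteq> f ` S" using RS by auto
    show "f ` S \<subseteq> f ` R"
    proof
      fix z assume "z \<in> f ` S"
      then obtain s where s: "s \<in> S" "z = f s" by auto
      then obtain x y where "s = x + y" "x \<in> R" "y \<in> K" using RK by blast
      then have "z = f x" using s K_def lf.add by auto
      then show "z \<in> f ` R" using \<open>x \<in> R\<close> by auto
    qed
  qed
  have "vec.dim (f ` R) = vec.dim R" by (rule vec.dim_image_eq[OF lf inj])
  then show ?thesis
    using \<open>vec.dim S = card C\<close> \<open>card C = card (C - B) + card B\<close> dimR B(4) img K_def by simp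
qed

lemma bit_add_self [simp]: "(a::bit) + a = 0"
  by (cases a) (simp_all flip: one_add_one)

lemma bitvec_add_self [simp]: "(v::bit^'n) + v = 0"
  by (simp add: vec_eq_iff)

lemma equiv_conn: "equiv UNIV (conn E)"
  unfolding conn_def equiv_def
  by (auto simp: refl_rtrancl trans_rtrancl sym_rtrancl sym_Un_converse)

lemma conn_sym: "(x, y) \<in> conn E \<Longrightarrow> (y, x) \<in> conn E"
  using equiv_conn[of E] by (meson equivE symD)

lemma conn_trans: "(x, y) \<in> conn E \<Longrightarrow> (y, z) \<in> conn E \<Longrightarrow> (x, z) \<in> conn E"
  using equiv_conn[of E] by (meson equivE transD)

lemma conn_refl [simp]: "(x, x) \<in> conn E"
  unfolding conn_def by simp

lemma conn_base: "(x, y) \<in> E \<Longrightarrow> (x, y) \<in> conn E"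
  unfolding conn_def by (rule r_into_rtrancl) (rule UnI1)

lemma conn_mono: "E \<subseteq> E' \<Longrightarrow> conn E \<subseteq> conn E'"
  unfolding conn_def by (rule rtrancl_mono) auto

lemma components_iff: "C \<in> components E \<longleftrightarrow> (\<exists>x. C = conn E `` {x})"
  unfolding components_def quotient_def by blast

lemma class_eq: "(x, y) \<in> conn E \<Longrightarrow> conn E `` {x} = conn E `` {y}"
  by (rule equiv_class_eq[OF equiv_conn])

lemma kerE_iff: "v \<in> kerE E \<longleftrightarrow> (\<forall>C \<in> components E. (\<Sum>x\<in>C. v $ x) = 0)"
  unfolding kerE_def rho0_def by (auto simp: vec_eq_iff)

lemma sum_vec_add: "(\<Sum>j\<in>C. (x + y) $ j) = (\<Sum>j\<in>C. x $ j) + (\<Sum>j\<in>C. y $ j)" for x :: "'a::field ^ 'n"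
  unfolding vector_add_component by (rule sum.distrib)

lemma sum_vec_smult: "(\<Sum>j\<in>C. (c *s x) $ j) = c * (\<Sum>j\<in>C. x $ j)" for x :: "'a::field ^ 'n"
  unfolding vector_smult_component by (simp only: sum_distrib_left)

lemma rho0_linear: "Vector_Spaces.linear (*s) (*s) (rho0 E)"
proof (rule linear_vecI)
  fix x y :: "bit ^ 'a"
  show "rho0 E (x + y) = rho0 E x + rho0 E y"
    unfolding rho0_def vec_eq_iff
    by (intro allI, case_tac "i \<in> components E")
      (simp_all only: vec_lambda_beta vector_add_component sum_vec_add if_True if_False add_0)
next
  fix c :: bit and x :: "bit ^ 'a"
  show "rho0 E (c *s x) = c *s rho0 E x"
    unfolding rho0_def vec_eq_iff
    by (intro allI, case_tac "i \<in> components E")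
      (simp_all only: vec_lambda_beta vector_smult_component sum_vec_smult if_True if_False mult_zero_right)
qed

lemma subspace_kerE: "vec.subspace (kerE E)"
proof -
  interpret lf: Vector_Spaces.linear "(*s)" "(*s)" "rho0 E" by (rule rho0_linear)
  show ?thesis unfolding kerE_def by (rule lf.subspace_kernel)
qed

definition gens :: "('n::finite \<times> 'n) set \<Rightarrow> (bit ^ 'n) set" where
  "gens E = (\<lambda>(u, v). axis u 1 + axis v 1) ` E"

lemma sum_axis_bit: "(\<Sum>x\<in>C. (axis u (1::bit)) $ x) = (if u \<in> C then 1 else 0)"
  for C :: "'n::finite set"
proof -
  have "(\<Sum>x\<in>C. (axis u (1::bit)) $ x) = (\<Sum>x\<in>C. if x = u then 1 else 0)"
    by (rule sum.cong) (simp_all only: axis_def vec_lambda_beta)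
  also have "\<dots> = (if u \<in> C then 1 else 0)" by (rule sum.delta) simp
  finally show ?thesis .
qed



lemma gen_sum_zero:
  assumes "(u, v) \<in> E" "C \<in> components E"
  shows "(\<Sum>x\<in>C. (axis u 1 + axis v (1::bit)) $ x) = 0"
proof -
  obtain x where C: "C = conn E `` {x}" using assms(2) unfolding components_iff by (elim exE)
  have uv: "(u, v) \<in> conn E" using assms(1) by (rule conn_base)
  have "(x, u) \<in> conn E \<longleftrightarrow> (x, v) \<in> conn E"
    using conn_sym[OF uv] conn_trans[of x u E v] conn_trans[of x v E u] uv by blast
  then have "u \<in> C \<longleftrightarrow> v \<in> C" unfolding C by simp
  then show ?thesis
    by (cases "u \<in> C") (simp_all only: sum_vec_add sum_axis_bit if_True if_False bit_add_self add_0)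
qed
lemma gens_memD: "g \<in> gens E \<Longrightarrow> \<exists>u v. (u, v) \<in> E \<and> g = axis u 1 + axis v 1"
  unfolding gens_def image_iff Bex_def by (metis case_prod_conv surj_pair)

lemma gens_in_kerE: "gens E \<subseteq> kerE E"
proof
  fix g assume "g \<in> gens E"
  then obtain u v where uv: "(u, v) \<in> E" "g = axis u 1 + axis v 1"
    by (metis gens_memD)
  show "g \<in> kerE E" unfolding kerE_iff uv(2)
    using gen_sum_zero[OF uv(1)] by (intro ballI)
qed

lemma conn_in_span: "(x, y) \<in> conn E \<Longrightarrow> axis x 1 + axis y 1 \<in> vec.span (gens E)"
  unfolding conn_def
proof (induction rule: rtrancl_induct)
  case base
  then show ?case by (simp add: vec.span_zero)
next
  case (step y z)
  have "axis y 1 + axis z 1 \<in> gens E"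
  proof -
    from step(2) have "(y, z) \<in> E \<or> (z, y) \<in> E" by auto
    then show ?thesis unfolding gens_def
      by (elim disjE) (force intro: rev_image_eqI[of "(y,z)"], force intro: rev_image_eqI[of "(z,y)"] simp: add.commute)
  qed
  then have yz: "axis y 1 + axis z 1 \<in> vec.span (gens E)" by (rule vec.span_base)
  have "axis x 1 + axis z 1 = (axis x 1 + axis y 1) + (axis y 1 + axis z (1::bit))"
  proof -
    have "(axis x 1 + axis y 1) + (axis y 1 + axis z (1::bit)) = axis x 1 + ((axis y 1 + axis y 1) + axis z 1)"
      by (simp only: add.assoc)
    also have "\<dots> = axis x 1 + axis z 1" by (simp only: bitvec_add_self add_0_left)
    finally show ?thesis by (rule sym)
  qed
  then show ?case using vec.span_add[OF step(3) yz] by simp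
qed

lemma kerE_span: "kerE E = vec.span (gens E)"
proof
  show "vec.span (gens E) \<subseteq> kerE E"
    by (rule vec.span_minimal[OF gens_in_kerE subspace_kerE])
  show "kerE E \<subseteq> vec.span (gens E)"
  proof
    fix v assume v: "v \<in> kerE E"
    define r where "r x = (SOME y. y \<in> conn E `` {x})" for x
    have r: "(x, r x) \<in> conn E" for x
      unfolding r_def using someI[of "\<lambda>y. y \<in> conn E `` {x}" x] by simp
    have rc: "(x, y) \<in> conn E \<Longrightarrow> r x = r y" for x y
      unfolding r_def using class_eq by metis
    define w where "w = (\<Sum>x\<in>UNIV. (v $ x) *s (axis x 1 + axis (r x) 1))"
    have w: "w \<in> vec.span (gens E)"
      unfolding w_def by (intro vec.span_sum vec.span_scale conn_in_span r)
    have "v = w"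
    proof (subst vec_eq_iff, intro allI)
      fix z
      have "w $ z = (\<Sum>x\<in>UNIV. (if z = x then v $ x else 0) + (if z = r x then v $ x else 0))"
        unfolding w_def sum_component vector_smult_component vector_add_component
        by (rule sum.cong) (simp_all add: axis_def)
      also have "\<dots> = v $ z + (\<Sum>x\<in>{x. r x = z}. v $ x)"
      proof -
        have 1: "(\<Sum>x\<in>UNIV. (if z = x then v $ x else 0)) = v $ z"
          by (subst sum.delta') simp_all
        have 2: "(\<Sum>x\<in>UNIV. (if z = r x then v $ x else 0)) = (\<Sum>x\<in>{x. r x = z}. v $ x)"
        proof -
          have e: "{x. r x = z} = {x \<in> UNIV. z = r x}" by blast
          show ?thesis unfolding e by (rule sum.inter_filter[symmetric]) simp
        qed
        show ?thesis unfolding sum.distrib 1 2 ..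
      qed
      also have "(\<Sum>x\<in>{x. r x = z}. v $ x) = 0"
      proof (cases "\<exists>x0. r x0 = z")
        case False then have "{x. r x = z} = {}" by blast
        then show ?thesis by (simp only: sum.empty)
      next
        case True
        then obtain x0 where x0: "r x0 = z" by blast
        have eq: "{x. r x = z} = conn E `` {x0}"
        proof (rule set_eqI, rule iffI)
          fix x assume "x \<in> {x. r x = z}"
          then have xz: "(x, z) \<in> conn E" and x0z: "(x0, z) \<in> conn E" using r[of x] r[of x0] x0 by auto
          have "(x0, x) \<in> conn E" using conn_trans[OF x0z conn_sym[OF xz]] .
          then show "x \<in> conn E `` {x0}" by simp
        next
          fix x assume "x \<in> conn E `` {x0}"
          then show "x \<in> {x. r x = z}" using rc x0 by auto
        qed
        have mem: "conn E `` {x0} \<in> components E" using components_iff by blast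
        show ?thesis unfolding eq using mem v unfolding kerE_iff by blast
      qed
      finally have "w $ z = v $ z" by (simp only: add_0_right)
      then show "v $ z = w $ z" by (rule sym)
    qed
    then show "v \<in> vec.span (gens E)" using w by simp
  qed
qed

lemma kerE_mono: "E1 \<subseteq> E2 \<Longrightarrow> kerE E1 \<subseteq> kerE E2"
  unfolding kerE_span gens_def by (intro vec.span_mono image_mono)

lemma kerE_Un: "kerE (E1 \<union> E2) = subspace_sum (kerE E1) (kerE E2)"
  unfolding kerE_span subspace_sum_def gens_def image_Un by (rule vec.span_Un)

lemma f0_linear: "Vector_Spaces.linear (*s) (*s) (f0 f)"
proof (rule linear_vecI)
  fix x y :: "bit ^ 'a"
  show "f0 f (x + y) = f0 f x + f0 f y"
    unfolding f0_def vec_eq_iff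
    by (simp only: vec_lambda_beta vector_add_component sum_vec_add simp_thms)
next
  fix c :: bit and x :: "bit ^ 'a"
  show "f0 f (c *s x) = c *s f0 f x"
    unfolding f0_def vec_eq_iff
    by (simp only: vec_lambda_beta vector_smult_component sum_vec_smult simp_thms)
qed

lemma f0_axis: "f0 f (axis u 1) = axis (f u) (1::bit)"
  unfolding vec_eq_iff
proof
  fix z
  have "f0 f (axis u 1) $ z = (if u \<in> {x. f x = z} then 1 else 0)"
    unfolding f0_def vec_lambda_beta by (rule sum_axis_bit)
  also have "\<dots> = axis (f u) (1::bit) $ z" unfolding axis_def vec_lambda_beta by simp
  finally show "f0 f (axis u 1) $ z = axis (f u) 1 $ z" .
qed

lemma f0_gens: "f0 f ` gens E = gens (img_graph f E)"
proof -
  interpret lf: Vector_Spaces.linear "(*s)" "(*s)" "f0 f" by (rule f0_linear)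
  have "f0 f ` gens E = (\<lambda>p. axis (f (fst p)) 1 + axis (f (snd p)) 1) ` E"
    unfolding gens_def image_image
    by (rule image_cong) (auto simp only: split_beta lf.add f0_axis)
  also have "\<dots> = gens (img_graph f E)"
    unfolding gens_def img_graph_def image_image
    by (rule image_cong) (auto simp only: split_beta fst_conv snd_conv)
  finally show ?thesis .
qed

lemma kerE_img: "f0 f ` kerE E = kerE (img_graph f E)"
  unfolding kerE_span f0_gens[symmetric] by (rule vec.linear_span_image[OF f0_linear, symmetric])

lemma ker_minus_eq:
  assumes d0: "\<And>x. d x x = 0" and b: "b > 0"
  shows "ker_minus d b = kerE (VRm d b)"
proof -
  define D where "D = {t. \<exists>x y. t = d x y \<and> d x y < b}"
  have "D \<subseteq> range (\<lambda>p. d (fst p) (snd p))"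
  proof
    fix t assume "t \<in> D"
    then obtain x y where "t = d x y" unfolding D_def by blast
    then show "t \<in> range (\<lambda>p. d (fst p) (snd p))" by (intro range_eqI[of _ _ "(x, y)"]) simp
  qed
  then have finD: "finite D" by (rule finite_subset) simp
  have "0 \<in> D" unfolding D_def using d0[of undefined] b by force
  define r0 where "r0 = Max D"
  have r0D: "r0 \<in> D" unfolding r0_def using finD \<open>0 \<in> D\<close> by (intro Max_in) auto
  have r00: "0 \<le> r0" unfolding r0_def using finD \<open>0 \<in> D\<close> by (intro Max_ge)
  have r0b: "r0 < b" using r0D unfolding D_def by auto
  have "VR d r0 = VRm d b"
  proof (rule set_eqI)
    fix p :: "'a \<times> 'a"
    obtain x y where p: "p = (x, y)" by (cases p)
    have "d x y < b \<Longrightarrow> d x y \<le> r0" unfolding r0_def using finD by (intro Max_ge) (auto simp: D_def)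
    then show "p \<in> VR d r0 \<longleftrightarrow> p \<in> VRm d b" unfolding p VR_def VRm_def using r0b by auto
  qed
  have sub: "kerE (VR d r) \<subseteq> kerE (VRm d b)" if "r < b" for r
    using that by (intro kerE_mono) (auto simp: VR_def VRm_def)
  show ?thesis
  proof
    show "ker_minus d b \<subseteq> kerE (VRm d b)" unfolding ker_minus_def using sub by (auto dest!: subsetD[OF sub, rotated])
    show "kerE (VRm d b) \<subseteq> ker_minus d b" unfolding ker_minus_def
      using r00 r0b \<open>VR d r0 = VRm d b\<close> by (intro UN_upper[of r0, THEN subset_trans[rotated]]) auto
  qed
qed


lemma subspace_sum_subspace: "vec.subspace A \<Longrightarrow> vec.subspace B \<Longrightarrow> vec.subspace (subspace_sum A B)"
  unfolding subspace_sum_def by (rule vec.subspace_sums)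

lemma grassmann: "vec.subspace A \<Longrightarrow> vec.subspace B \<Longrightarrow>
   vec.dim (subspace_sum A B) + vec.dim (A \<inter> B) = vec.dim A + vec.dim B"
  unfolding subspace_sum_def by (rule vec.dim_sums_Int)

lemma dim_identity:
  fixes P P' Q Q' :: "('a::field ^ 'n) set"
  assumes sP: "vec.subspace P" and sP': "vec.subspace P'" and sQ: "vec.subspace Q" and sQ': "vec.subspace Q'"
    and PP: "P \<subseteq> P'" and QQ: "Q \<subseteq> Q'"
  shows "int (vec.dim (P' \<inter> Q')) - int (vec.dim (subspace_sum (P \<inter> Q') (P' \<inter> Q)))
       = int (vec.dim (subspace_sum P' Q \<inter> subspace_sum P Q')) - int (vec.dim (subspace_sum P Q))"
proof -
  have s1: "subspace_sum (subspace_sum P' Q) (subspace_sum P Q') = subspace_sum P' Q'"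
  proof
    show "subspace_sum (subspace_sum P' Q) (subspace_sum P Q') \<subseteq> subspace_sum P' Q'"
    proof
      fix z assume "z \<in> subspace_sum (subspace_sum P' Q) (subspace_sum P Q')"
      then obtain p' q p q' where z: "z = (p' + q) + (p + q')" and m: "p' \<in> P'" "q \<in> Q" "p \<in> P" "q' \<in> Q'"
        unfolding subspace_sum_def by blast
      have "z = (p' + p) + (q + q')" unfolding z by (simp add: algebra_simps)
      moreover have "p' + p \<in> P'" using m PP sP' vec.subspace_add by blast
      moreover have "q + q' \<in> Q'" using m QQ sQ' vec.subspace_add by blast
      ultimately show "z \<in> subspace_sum P' Q'" unfolding subspace_sum_def by blast
    qed
    show "subspace_sum P' Q' \<subseteq> subspace_sum (subspace_sum P' Q) (subspace_sum P Q')"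
    proof
      fix z assume "z \<in> subspace_sum P' Q'"
      then obtain p' q' where z: "z = p' + q'" and m: "p' \<in> P'" "q' \<in> Q'"
        unfolding subspace_sum_def by blast
      have "z = (p' + 0) + (0 + q')" unfolding z by simp
      moreover have "p' + 0 \<in> subspace_sum P' Q" using m vec.subspace_0[OF sQ] unfolding subspace_sum_def by blast
      moreover have "0 + q' \<in> subspace_sum P Q'" using m vec.subspace_0[OF sP] unfolding subspace_sum_def by blast
      ultimately show "z \<in> subspace_sum (subspace_sum P' Q) (subspace_sum P Q')"
        unfolding subspace_sum_def by blast
    qed
  qed
  have i1: "(P \<inter> Q') \<inter> (P' \<inter> Q) = P \<inter> Q" using PP QQ by blast
  have sPQ': "vec.subspace (P \<inter> Q')" "vec.subspace (P' \<inter> Q)" using sP sQ' sP' sQ by (auto intro: vec.subspace_inter)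
  have ss: "vec.subspace (subspace_sum P' Q)" "vec.subspace (subspace_sum P Q')"
    using sP sQ' sP' sQ by (auto intro: subspace_sum_subspace)
  have e1: "vec.dim (subspace_sum (P \<inter> Q') (P' \<inter> Q)) + vec.dim (P \<inter> Q) = vec.dim (P \<inter> Q') + vec.dim (P' \<inter> Q)"
    using grassmann[OF sPQ'] i1 by simp
  have e2: "vec.dim (subspace_sum P' Q') + vec.dim (P' \<inter> Q') = vec.dim P' + vec.dim Q'" by (rule grassmann[OF sP' sQ'])
  have e3: "vec.dim (subspace_sum P Q') + vec.dim (P \<inter> Q') = vec.dim P + vec.dim Q'" by (rule grassmann[OF sP sQ'])
  have e4: "vec.dim (subspace_sum P' Q) + vec.dim (P' \<inter> Q) = vec.dim P' + vec.dim Q" by (rule grassmann[OF sP' sQ])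
  have e5: "vec.dim (subspace_sum P Q) + vec.dim (P \<inter> Q) = vec.dim P + vec.dim Q" by (rule grassmann[OF sP sQ])
  have e6: "vec.dim (subspace_sum P' Q') + vec.dim (subspace_sum P' Q \<inter> subspace_sum P Q')
      = vec.dim (subspace_sum P' Q) + vec.dim (subspace_sum P Q')"
    using grassmann[OF ss] s1 by simp
  show ?thesis using e1 e2 e3 e4 e5 e6 by linarith
qed

lemma dim_identity_nat:
  fixes P P' Q Q' :: "('a::field ^ 'n) set"
  assumes sP: "vec.subspace P" and sP': "vec.subspace P'" and sQ: "vec.subspace Q" and sQ': "vec.subspace Q'"
    and PP: "P \<subseteq> P'" and QQ: "Q \<subseteq> Q'"
  shows "vec.dim (P' \<inter> Q') - vec.dim (subspace_sum (P \<inter> Q') (P' \<inter> Q))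
       = vec.dim (subspace_sum P' Q \<inter> subspace_sum P Q') - vec.dim (subspace_sum P Q)"
proof -
  have "subspace_sum (P \<inter> Q') (P' \<inter> Q) \<subseteq> P' \<inter> Q'"
  proof
    fix z assume "z \<in> subspace_sum (P \<inter> Q') (P' \<inter> Q)"
    then obtain a c where z: "z = a + c" and m: "a \<in> P \<inter> Q'" "c \<in> P' \<inter> Q" unfolding subspace_sum_def by blast
    show "z \<in> P' \<inter> Q'" unfolding z using m PP QQ vec.subspace_add sP' sQ' by blast
  qed
  then have le1: "vec.dim (subspace_sum (P \<inter> Q') (P' \<inter> Q)) \<le> vec.dim (P' \<inter> Q')" by (rule vec.dim_subset)
  have "subspace_sum P Q \<subseteq> subspace_sum P' Q \<inter> subspace_sum P Q'"
    unfolding subspace_sum_def using PP QQ by blast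
  then have le2: "vec.dim (subspace_sum P Q) \<le> vec.dim (subspace_sum P' Q \<inter> subspace_sum P Q')" by (rule vec.dim_subset)
  show ?thesis using dim_identity[OF assms] le1 le2 by linarith
qed


lemma bit_add_eq0: "((a::bit) + b = 0) \<longleftrightarrow> a = b"
  by (cases a; cases b) simp_all

lemma cycle_iff:
  fixes A B C :: "('z::finite \<times> 'z) set" and v :: "bit ^ ('z set \<times> bool)"
  defines "Es \<equiv> {c. c \<in> components C} \<times> (UNIV :: bool set)"
    and "s \<equiv> (\<lambda>(c, _::bool). (Inr (Inl c) :: 'z set + 'z set + 'z set))"
    and "t \<equiv> (\<lambda>(c, side). if side then Inr (Inr (conn B `` c)) else Inl (conn A `` c))"
  shows "v \<in> cycle_space Es s t \<longleftrightarrow>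
     (\<forall>e. e \<notin> Es \<longrightarrow> v $ e = 0) \<and>
     (\<forall>c \<in> components C. v $ (c, False) = v $ (c, True)) \<and>
     (\<forall>\<alpha>. (\<Sum>c\<in>{c \<in> components C. conn A `` c = \<alpha>}. v $ (c, False)) = 0) \<and>
     (\<forall>\<beta>. (\<Sum>c\<in>{c \<in> components C. conn B `` c = \<beta>}. v $ (c, True)) = 0)"
proof -
  have finE: "finite (X :: ('z set \<times> bool) set)" for X by simp
  have sA: "{e \<in> Es. s e = Inl \<alpha>} = {}" for \<alpha> unfolding s_def by auto
  have tA: "{e \<in> Es. t e = Inl \<alpha>} = (\<lambda>c. (c, False)) ` {c \<in> components C. conn A `` c = \<alpha>}" for \<alpha>
    unfolding t_def Es_def by (auto split: if_splits)
  have sB: "{e \<in> Es. s e = Inr (Inr \<beta>)} = {}" for \<beta> unfolding s_def by auto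
  have tB: "{e \<in> Es. t e = Inr (Inr \<beta>)} = (\<lambda>c. (c, True)) ` {c \<in> components C. conn B `` c = \<beta>}" for \<beta>
    unfolding t_def Es_def by (auto split: if_splits)
  have sC: "{e \<in> Es. s e = Inr (Inl c)} = (if c \<in> components C then {(c, False), (c, True)} else {})" for c
    unfolding s_def Es_def by (auto split: if_splits)
  have tC: "{e \<in> Es. t e = Inr (Inl c)} = {}" for c unfolding t_def by (auto split: if_splits)
  have injF: "inj_on (\<lambda>c. (c, False)) X" for X :: "'z set set" by (rule inj_onI) simp
  have injT: "inj_on (\<lambda>c. (c, True)) X" for X :: "'z set set" by (rule inj_onI) simp
  have vA: "(\<Sum>e\<in>{e \<in> Es. s e = Inl \<alpha>}. v $ e) + (\<Sum>e\<in>{e \<in> Es. t e = Inl \<alpha>}. v $ e)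
      = (\<Sum>c\<in>{c \<in> components C. conn A `` c = \<alpha>}. v $ (c, False))" for \<alpha>
    unfolding sA tA sum.empty add_0 sum.reindex[OF injF] comp_def ..
  have vB: "(\<Sum>e\<in>{e \<in> Es. s e = Inr (Inr \<beta>)}. v $ e) + (\<Sum>e\<in>{e \<in> Es. t e = Inr (Inr \<beta>)}. v $ e)
      = (\<Sum>c\<in>{c \<in> components C. conn B `` c = \<beta>}. v $ (c, True))" for \<beta>
    unfolding sB tB sum.empty add_0 sum.reindex[OF injT] comp_def ..
  have vC: "(\<Sum>e\<in>{e \<in> Es. s e = Inr (Inl c)}. v $ e) + (\<Sum>e\<in>{e \<in> Es. t e = Inr (Inl c)}. v $ e)
      = (if c \<in> components C then v $ (c, False) + v $ (c, True) else 0)" for c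
    unfolding sC tC by (cases "c \<in> components C") (simp_all only: if_True if_False sum.empty add_0_right sum.insert_if finite.emptyI finite_insert insert_iff empty_iff prod.inject simp_thms)
  have allv: "(\<forall>w. P w) \<longleftrightarrow> (\<forall>\<alpha>. P (Inl \<alpha>)) \<and> (\<forall>c. P (Inr (Inl c))) \<and> (\<forall>\<beta>. P (Inr (Inr \<beta>)))"
    for P :: "'z set + 'z set + 'z set \<Rightarrow> bool"
    by (metis sum.exhaust)
  show ?thesis
    unfolding cycle_space_def mem_Collect_eq allv vA vB vC
    by (auto simp only: bit_add_eq0 split: if_splits)
qed

lemma comp_self: "x \<in> conn E `` {x}" by simp

lemma comp_class: "c \<in> components C \<Longrightarrow> x \<in> c \<Longrightarrow> c = conn C `` {x}"
proof -
  assume c: "c \<in> components C" and x: "x \<in> c"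
  obtain y where cy: "c = conn C `` {y}" using c unfolding components_iff by (elim exE)
  have "(y, x) \<in> conn C" using x unfolding cy by simp
  then show ?thesis unfolding cy by (rule class_eq)
qed

lemma class_in_comps: "conn E `` {x} \<in> components E"
  unfolding components_iff by (rule exI) (rule refl)

lemma connR_comp: "C \<subseteq> R \<Longrightarrow> c \<in> components C \<Longrightarrow> x \<in> c \<Longrightarrow> conn R `` c = conn R `` {x}"
proof -
  assume CR: "C \<subseteq> R" and c: "c \<in> components C" and x: "x \<in> c"
  have cx: "c = conn C `` {x}" by (rule comp_class[OF c x])
  show ?thesis
  proof
    show "conn R `` c \<subseteq> conn R `` {x}"
    proof
      fix y assume "y \<in> conn R `` c"
      then obtain x' where x': "x' \<in> c" "(x', y) \<in> conn R" by blast
      have "(x, x') \<in> conn C" using x'(1) unfolding cx by simp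
      then have "(x, x') \<in> conn R" using conn_mono[OF CR] by blast
      then have "(x, y) \<in> conn R" using x'(2) by (rule conn_trans)
      then show "y \<in> conn R `` {x}" by simp
    qed
    show "conn R `` {x} \<subseteq> conn R `` c" using x by blast
  qed
qed

lemma fibre_mem:
  assumes CR: "C \<subseteq> R" and c: "c \<in> components C" and x: "x \<in> c" and al: "\<alpha> \<in> components R"
  shows "x \<in> \<alpha> \<longleftrightarrow> conn R `` c = \<alpha>"
proof -
  obtain y where ay: "\<alpha> = conn R `` {y}" using al unfolding components_iff by (elim exE)
  have e: "conn R `` c = conn R `` {x}" by (rule connR_comp[OF CR c x])
  show ?thesis
  proof
    assume "x \<in> \<alpha>"
    then have "(y, x) \<in> conn R" unfolding ay by simp
    then have "conn R `` {y} = conn R `` {x}" by (rule class_eq)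
    then show "conn R `` c = \<alpha>" unfolding e ay by (rule sym)
  next
    assume "conn R `` c = \<alpha>"
    then have "conn R `` {x} = \<alpha>" unfolding e .
    then show "x \<in> \<alpha>" using comp_self[of x "R"] by simp
  qed
qed

lemma fibre_zero:
  fixes w :: "bit ^ 'z::finite"
  assumes CR: "C \<subseteq> R" and w: "w \<in> kerE R"
  shows "(\<Sum>c\<in>{c \<in> components C. conn R `` c = \<alpha>}. (\<Sum>x\<in>c. w $ x)) = 0"
proof -
  define K where "K = {c \<in> components C. conn R `` c = \<alpha>}"
  have disj: "\<forall>A\<in>K. \<forall>B\<in>K. A \<noteq> B \<longrightarrow> A \<inter> B = {}"
  proof (intro ballI impI)
    fix c1 c2 assume c1: "c1 \<in> K" and c2: "c2 \<in> K" and ne: "c1 \<noteq> c2"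
    show "c1 \<inter> c2 = {}"
    proof (rule ccontr)
      assume "c1 \<inter> c2 \<noteq> {}"
      then obtain x where x: "x \<in> c1" "x \<in> c2" by blast
      have "c1 \<in> components C" "c2 \<in> components C" using c1 c2 unfolding K_def by auto
      then have "c1 = conn C `` {x}" "c2 = conn C `` {x}" using x by (auto intro!: comp_class)
      then show False using ne by simp
    qed
  qed
  have "(\<Sum>c\<in>K. (\<Sum>x\<in>c. w $ x)) = (\<Sum>x\<in>\<Union>K. w $ x)"
    using sum.Union_disjoint[of K "\<lambda>x. w $ x", OF _ disj] by simp
  also have "\<dots> = 0"
  proof (cases "K = {}")
    case True then show ?thesis by (simp only: Union_empty sum.empty)
  next
    case False
    then obtain c0 where c0: "c0 \<in> K" by blast
    then have c0C: "c0 \<in> components C" and c0a: "conn R `` c0 = \<alpha>" unfolding K_def by auto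
    obtain x0 where "c0 = conn C `` {x0}" using c0C unfolding components_iff by (elim exE)
    then have x0: "x0 \<in> c0" by simp
    have aR: "\<alpha> \<in> components R" using connR_comp[OF CR c0C x0] c0a class_in_comps by metis
    have "\<Union>K = \<alpha>"
    proof
      show "\<Union>K \<subseteq> \<alpha>"
      proof
        fix x assume "x \<in> \<Union>K"
        then obtain c where "c \<in> K" "x \<in> c" by blast
        then show "x \<in> \<alpha>" using fibre_mem[OF CR _ _ aR] unfolding K_def by blast
      qed
      show "\<alpha> \<subseteq> \<Union>K"
      proof
        fix x assume xa: "x \<in> \<alpha>"
        have cC: "conn C `` {x} \<in> components C" by (rule class_in_comps)
        have xc: "x \<in> conn C `` {x}" by (rule comp_self)
        have "conn R `` (conn C `` {x}) = \<alpha>" using fibre_mem[OF CR cC xc aR] xa by blast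
        then have "conn C `` {x} \<in> K" unfolding K_def using cC by blast
        then show "x \<in> \<Union>K" using xc by blast
      qed
    qed
    then show ?thesis using w aR unfolding kerE_iff by simp
  qed
  finally show ?thesis unfolding K_def .
qed

definition Phi :: "('z::finite \<times> 'z) set \<Rightarrow> bit ^ 'z \<Rightarrow> bit ^ ('z set \<times> bool)" where
  "Phi C w = (\<chi> p. if fst p \<in> components C then (\<Sum>x\<in>fst p. w $ x) else 0)"

lemma Phi_linear: "Vector_Spaces.linear (*s) (*s) (Phi C)"
proof (rule linear_vecI)
  fix x y :: "bit ^ 'a"
  show "Phi C (x + y) = Phi C x + Phi C y"
    unfolding Phi_def vec_eq_iff
    by (intro allI, case_tac "fst i \<in> components C")
      (simp_all only: vec_lambda_beta vector_add_component sum_vec_add if_True if_False add_0)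
next
  fix c :: bit and x :: "bit ^ 'a"
  show "Phi C (c *s x) = c *s Phi C x"
    unfolding Phi_def vec_eq_iff
    by (intro allI, case_tac "fst i \<in> components C")
      (simp_all only: vec_lambda_beta vector_smult_component sum_vec_smult if_True if_False mult_zero_right)
qed

lemma Phi_kernel:
  assumes CA: "C \<subseteq> A" and CB: "C \<subseteq> B"
  shows "(kerE A \<inter> kerE B) \<inter> {w. Phi C w = 0} = kerE C"
proof
  show "(kerE A \<inter> kerE B) \<inter> {w. Phi C w = 0} \<subseteq> kerE C"
  proof
    fix w assume "w \<in> (kerE A \<inter> kerE B) \<inter> {w. Phi C w = 0}"
    then have w: "Phi C w = 0" by blast
    show "w \<in> kerE C" unfolding kerE_iff
    proof
      fix c assume c: "c \<in> components C"
      have "Phi C w $ (c, False) = 0" using w by simp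
      then show "(\<Sum>x\<in>c. w $ x) = 0" unfolding Phi_def vec_lambda_beta fst_conv using c by (simp only: if_True)
    qed
  qed
  show "kerE C \<subseteq> (kerE A \<inter> kerE B) \<inter> {w. Phi C w = 0}"
  proof
    fix w assume w: "w \<in> kerE C"
    have "w \<in> kerE A" "w \<in> kerE B" using w kerE_mono[OF CA] kerE_mono[OF CB] by blast+
    moreover have "Phi C w = 0"
      unfolding Phi_def vec_eq_iff
    proof
      fix p :: "'a set \<times> bool"
      show "(\<chi> p. if fst p \<in> components C then \<Sum>x\<in>fst p. w $ x else 0) $ p = 0 $ p"
        using w unfolding kerE_iff vec_lambda_beta zero_index by simp
    qed
    ultimately show "w \<in> (kerE A \<inter> kerE B) \<inter> {w. Phi C w = 0}" by blast
  qed
qed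

lemma sum_w:
  fixes u :: "'z::finite set \<Rightarrow> bit" and rep :: "'z set \<Rightarrow> 'z" and K :: "'z set set"
  assumes "finite K"
  shows "(\<Sum>x\<in>Y. (\<Sum>c\<in>K. u c *s axis (rep c) 1) $ x) = (\<Sum>c\<in>K. if rep c \<in> Y then u c else 0)"
proof -
  have "(\<Sum>x\<in>Y. (\<Sum>c\<in>K. u c *s axis (rep c) 1) $ x) = (\<Sum>x\<in>Y. \<Sum>c\<in>K. u c * (axis (rep c) 1 $ x))"
    by (simp only: sum_component vector_smult_component)
  also have "\<dots> = (\<Sum>c\<in>K. \<Sum>x\<in>Y. u c * (axis (rep c) 1 $ x))" by (rule sum.swap)
  also have "\<dots> = (\<Sum>c\<in>K. u c * (\<Sum>x\<in>Y. axis (rep c) 1 $ x))" by (simp only: sum_distrib_left)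
  also have "\<dots> = (\<Sum>c\<in>K. if rep c \<in> Y then u c else 0)"
    apply (rule sum.cong[OF refl])
    subgoal for c by (cases "rep c \<in> Y") (simp_all only: sum_axis_bit if_True if_False mult_1_right mult_zero_right)
    done
  finally show ?thesis .
qed

lemma Phi_image:
  fixes A B C :: "('z::finite \<times> 'z) set"
  assumes CA: "C \<subseteq> A" and CB: "C \<subseteq> B"
  defines "Es \<equiv> {c. c \<in> components C} \<times> (UNIV :: bool set)"
    and "s \<equiv> (\<lambda>(c, _::bool). (Inr (Inl c) :: 'z set + 'z set + 'z set))"
    and "t \<equiv> (\<lambda>(c, side). if side then Inr (Inr (conn B `` c)) else Inl (conn A `` c))"
  shows "Phi C ` (kerE A \<inter> kerE B) = cycle_space Es s t"
proof
  show "Phi C ` (kerE A \<inter> kerE B) \<subseteq> cycle_space Es s t"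
  proof
    fix v assume "v \<in> Phi C ` (kerE A \<inter> kerE B)"
    then obtain w where w: "w \<in> kerE A" "w \<in> kerE B" and vw: "v = Phi C w" by blast
    have vc: "v $ (c, side) = (if c \<in> components C then (\<Sum>x\<in>c. w $ x) else 0)" for c side
      unfolding vw Phi_def vec_lambda_beta fst_conv ..
    have 1: "\<forall>e. e \<notin> Es \<longrightarrow> v $ e = 0"
    proof (intro allI impI)
      fix e assume "e \<notin> Es"
      then obtain c side where e: "e = (c, side)" "c \<notin> components C" unfolding Es_def by (cases e) auto
      show "v $ e = 0" unfolding e(1) vc using e(2) by (simp only: if_False)
    qed
    have 2: "\<forall>c \<in> components C. v $ (c, False) = v $ (c, True)" unfolding vc by simp
    have 3: "(\<Sum>c\<in>{c \<in> components C. conn A `` c = \<alpha>}. v $ (c, False)) = 0" for \<alpha>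
    proof -
      have "(\<Sum>c\<in>{c \<in> components C. conn A `` c = \<alpha>}. v $ (c, False))
          = (\<Sum>c\<in>{c \<in> components C. conn A `` c = \<alpha>}. (\<Sum>x\<in>c. w $ x))"
        by (rule sum.cong[OF refl]) (simp only: vc mem_Collect_eq if_True)
      also have "\<dots> = 0" by (rule fibre_zero[OF CA w(1)])
      finally show ?thesis .
    qed
    have 4: "(\<Sum>c\<in>{c \<in> components C. conn B `` c = \<beta>}. v $ (c, True)) = 0" for \<beta>
    proof -
      have "(\<Sum>c\<in>{c \<in> components C. conn B `` c = \<beta>}. v $ (c, True))
          = (\<Sum>c\<in>{c \<in> components C. conn B `` c = \<beta>}. (\<Sum>x\<in>c. w $ x))"
        by (rule sum.cong[OF refl]) (simp only: vc mem_Collect_eq if_True)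
      also have "\<dots> = 0" by (rule fibre_zero[OF CB w(2)])
      finally show ?thesis .
    qed
    show "v \<in> cycle_space Es s t"
      unfolding Es_def s_def t_def cycle_iff using 1 2 3 4 unfolding Es_def by blast
  qed
  show "cycle_space Es s t \<subseteq> Phi C ` (kerE A \<inter> kerE B)"
  proof
    fix v assume "v \<in> cycle_space Es s t"
    then have 1: "\<forall>e. e \<notin> Es \<longrightarrow> v $ e = 0"
      and 2: "\<forall>c \<in> components C. v $ (c, False) = v $ (c, True)"
      and 3: "\<And>\<alpha>. (\<Sum>c\<in>{c \<in> components C. conn A `` c = \<alpha>}. v $ (c, False)) = 0"
      and 4: "\<And>\<beta>. (\<Sum>c\<in>{c \<in> components C. conn B `` c = \<beta>}. v $ (c, True)) = 0"
      unfolding Es_def s_def t_def cycle_iff unfolding Es_def by blast+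
    define rep where "rep c = (SOME x. x \<in> c)" for c :: "'z set"
    have rep: "rep c \<in> c" if c_in: "c \<in> components C" for c
    proof -
      obtain y where "c = conn C `` {y}" using c_in unfolding components_iff by (elim exE)
      then have "y \<in> c" by simp
      then show ?thesis unfolding rep_def by (rule someI)
    qed
    define u where "u c = v $ (c, False)" for c
    define w where "w = (\<Sum>c\<in>components C. u c *s axis (rep c) (1::bit))"
    have finK: "finite (components C)" by simp
    have sw: "(\<Sum>x\<in>Y. w $ x) = (\<Sum>c\<in>components C. if rep c \<in> Y then u c else 0)" for Y
      unfolding w_def by (rule sum_w[OF finK])
    have fib: "(\<Sum>x\<in>\<alpha>. w $ x) = (\<Sum>c\<in>{c \<in> components C. conn R `` c = \<alpha>}. u c)"
      if CR: "C \<subseteq> R" and al: "\<alpha> \<in> components R" for R \<alpha>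
    proof -
      have "(\<Sum>x\<in>\<alpha>. w $ x) = (\<Sum>c\<in>components C. if conn R `` c = \<alpha> then u c else 0)"
        unfolding sw by (rule sum.cong[OF refl]) (simp only: fibre_mem[OF CR _ rep al])
      also have "\<dots> = (\<Sum>c\<in>{c \<in> components C. conn R `` c = \<alpha>}. u c)"
        by (rule sum.inter_filter[symmetric, OF finK])
      finally show ?thesis .
    qed
    have wA: "w \<in> kerE A" unfolding kerE_iff
    proof
      fix \<alpha> assume al: "\<alpha> \<in> components A"
      show "(\<Sum>x\<in>\<alpha>. w $ x) = 0" unfolding fib[OF CA al] u_def by (rule 3)
    qed
    have wB: "w \<in> kerE B" unfolding kerE_iff
    proof
      fix \<beta> assume be: "\<beta> \<in> components B"
      have "(\<Sum>x\<in>\<beta>. w $ x) = (\<Sum>c\<in>{c \<in> components C. conn B `` c = \<beta>}. v $ (c, True))"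
        unfolding fib[OF CB be] u_def using 2 by (intro sum.cong[OF refl]) blast
      then show "(\<Sum>x\<in>\<beta>. w $ x) = 0" using 4 by simp
    qed
    have "Phi C w = v"
      unfolding vec_eq_iff
    proof
      fix p :: "'z set \<times> bool"
      obtain c side where p: "p = (c, side)" by (cases p)
      show "Phi C w $ p = v $ p"
      proof (cases "c \<in> components C")
        case False
        then have "p \<notin> Es" unfolding p Es_def by simp
        then show ?thesis using 1 False unfolding Phi_def vec_lambda_beta p fst_conv by simp
      next
        case True
        have eqc: "(rep c' \<in> c) = (c' = c)" if c': "c' \<in> components C" for c'
        proof
          assume "rep c' \<in> c"
          then have "c = conn C `` {rep c'}" "c' = conn C `` {rep c'}"
            using comp_class[OF True] comp_class[OF c' rep[OF c']] by auto
          then show "c' = c" by simp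
        next
          assume "c' = c" then show "rep c' \<in> c" using rep[OF c'] by simp
        qed
        have "(\<Sum>x\<in>c. w $ x) = (\<Sum>c'\<in>components C. if c' = c then u c' else 0)"
          unfolding sw by (rule sum.cong[OF refl]) (simp only: eqc)
        also have "\<dots> = u c" using True by (simp only: sum.delta finK if_True)
        also have "\<dots> = v $ (c, side)" unfolding u_def using 2 True by (cases side) auto
        finally show ?thesis unfolding Phi_def vec_lambda_beta p fst_conv using True by (simp only: if_True)
      qed
    qed
    then show "v \<in> Phi C ` (kerE A \<inter> kerE B)" using wA wB by blast
  qed
qed

lemma H1_eq:
  fixes A B C :: "('z::finite \<times> 'z) set"
  assumes CA: "C \<subseteq> A" and CB: "C \<subseteq> B"
  shows "graph_H1_dim ({c. c \<in> components C} \<times> UNIV) (\<lambda>(c, _). (Inr (Inl c) :: 'z set + 'z set + 'z set))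
     (\<lambda>(c, side). if side then Inr (Inr (conn B `` c)) else Inl (conn A `` c))
   = vec.dim (kerE A \<inter> kerE B) - vec.dim (kerE C)"
proof -
  have sS: "vec.subspace (kerE A \<inter> kerE B)" by (intro vec.subspace_inter subspace_kerE)
  have "vec.dim (kerE A \<inter> kerE B) = vec.dim (Phi C ` (kerE A \<inter> kerE B)) + vec.dim (kerE C)"
    using rank_nullity_vec[OF Phi_linear[of C] sS] Phi_kernel[OF CA CB] by simp
  then show ?thesis unfolding graph_H1_dim_def Phi_image[OF CA CB, symmetric] by simp
qed

theorem proposition3p1:
  fixes dX :: "'x::finite \<Rightarrow> 'x \<Rightarrow> real"
    and dZ :: "'z::finite \<Rightarrow> 'z \<Rightarrow> real"
    and f :: "'x \<Rightarrow> 'z"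
    and a b :: real
  assumes "finite_metric dX" and "finite_metric dZ"
    and "a \<in> bars0 dX" and "b \<in> bars0 dZ"
  shows "Mf0 dX dZ f a b = G_H1_dim dX dZ f a b"
proof -
  have dX0: "\<And>x. dX x x = 0" using assms(1) unfolding finite_metric_def by blast
  have dZ0: "\<And>x. dZ x x = 0" using assms(2) unfolding finite_metric_def by blast
  have a0: "a > 0" using assms(3) unfolding bars0_def by blast
  have b0: "b > 0" using assms(4) unfolding bars0_def by blast
  have VRmX: "VRm dX a \<subseteq> VR dX a" unfolding VR_def VRm_def by auto
  have VRmZ: "VRm dZ b \<subseteq> VR dZ b" unfolding VR_def VRm_def by auto
  have imgm: "img_graph f (VRm dX a) \<subseteq> img_graph f (VR dX a)"
    unfolding img_graph_def using VRmX by (rule image_mono)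
  define P' where "P' = kerE (img_graph f (VR dX a))"
  define P where "P = kerE (img_graph f (VRm dX a))"
  define Q' where "Q' = kerE (VR dZ b)"
  define Q where "Q = kerE (VRm dZ b)"
  have e1: "f0 f ` ker_plus dX a = P'" unfolding P'_def ker_plus_def by (rule kerE_img)
  have e2: "f0 f ` ker_minus dX a = P" unfolding P_def ker_minus_eq[OF dX0 a0] by (rule kerE_img)
  have e3: "ker_plus dZ b = Q'" unfolding Q'_def ker_plus_def ..
  have e4: "ker_minus dZ b = Q" unfolding Q_def by (rule ker_minus_eq[OF dZ0 b0])
  have CA: "GC dX dZ f a b \<subseteq> GA dX dZ f a b" unfolding GC_def GA_def using imgm by blast
  have CB: "GC dX dZ f a b \<subseteq> GB dX dZ f a b" unfolding GC_def GB_def using VRmZ by blast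
  have kA: "kerE (GA dX dZ f a b) = subspace_sum P' Q" unfolding GA_def P'_def Q_def by (rule kerE_Un)
  have kB: "kerE (GB dX dZ f a b) = subspace_sum P Q'" unfolding GB_def P_def Q'_def by (rule kerE_Un)
  have kC: "kerE (GC dX dZ f a b) = subspace_sum P Q" unfolding GC_def P_def Q_def by (rule kerE_Un)
  have PP: "P \<subseteq> P'" unfolding P_def P'_def using imgm by (rule kerE_mono)
  have QQ: "Q \<subseteq> Q'" unfolding Q_def Q'_def using VRmZ by (rule kerE_mono)
  have "Mf0 dX dZ f a b = vec.dim (P' \<inter> Q') - vec.dim (subspace_sum (P \<inter> Q') (P' \<inter> Q))"
    unfolding Mf0_def quot_dim_def e1 e2 e3 e4 ..
  also have "\<dots> = vec.dim (subspace_sum P' Q \<inter> subspace_sum P Q') - vec.dim (subspace_sum P Q)"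
  proof -
    have sP: "vec.subspace P" "vec.subspace P'" "vec.subspace Q" "vec.subspace Q'"
      unfolding P_def P'_def Q_def Q'_def by (rule subspace_kerE)+
    show ?thesis by (rule dim_identity_nat[OF sP PP QQ])
  qed
  also have "\<dots> = G_H1_dim dX dZ f a b"
    unfolding G_H1_dim_def H1_eq[OF CA CB] kA kB kC ..
  finally show ?thesis .
qed
end
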